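(* Let $(p_D)_{D\in\mathcal{I}}$ be a probability distribution on $\mathcal{I}$ and $X$ a random variable with $P(X=D)=p_D$. Define the guessing-entropy price $$p^G(\mathbf{Q})=G(X)-\sum_{E:\,p_E>0}p_E\cdot G(X\mid \mathbf{Q}(X)=E),\qquad p_E=\sum_{D:\mathbf{Q}(D)=E}p_D.$$ Then $p^G$ is an arbitrage-free instance-independent pricing function.
   Context: $\mathcal{I}$ is a countable nonempty set of database instances; queries are deterministic functions on $\mathcal{I}$; a query bundle is a finite tuple of queries from a language $\mathcal{L}$, evaluated componentwise; $B(\mathcal{L})$ is the set of bundles, closed under concatenation $\mathbf{Q}_1,\mathbf{Q}_2$. For a random variable $Y$ with values in a countable set, enumerate its values $y_1,y_2,\dots$ in order of non-increasing probability and set $G(Y)=\sum_i i\cdot P(Y=y_i)$ (guessing entropy; it is assumed $G(X)<\infty$ so that the price is defined). $G(X\mid\mathbf{Q}(X)=E)$ is the guessing entropy of the conditional distribution of $X$ given $\mathbf{Q}(X)=E$. An instance-independent pricing function $p$ is arbitrage-free if (i) whenever for all $D',D''\in\mathcal{I}$, $\mathbf{Q}_2(D')=\mathbf{Q}_2(D'')$ implies $\mathbf{Q}_1(D')=\mathbf{Q}_1(D'')$, we have $p(\mathbf{Q}_2)\ge p(\mathbf{Q}_1)$; and (ii) $p(\mathbf{Q}_1,\mathbf{Q}_2)\le p(\mathbf{Q}_1)+p(\mathbf{Q}_2)$ for all bundles. *)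

theory Defs
  imports "HOL-Probability.Probability"
begin

definition enum_index :: "'a pmf \<Rightarrow> nat set" where
  "enum_index p = (if finite (set_pmf p) then {..<card (set_pmf p)} else UNIV)"

(* e enumerates the values of positive probability in order of non-increasing probability;
   position n (0-based) corresponds to the guess number n+1. *)
definition guess_enum :: "'a pmf \<Rightarrow> (nat \<Rightarrow> 'a) \<Rightarrow> bool" where
  "guess_enum p e \<longleftrightarrow>
     bij_betw e (enum_index p) (set_pmf p) \<and>
     (\<forall>i\<in>enum_index p. \<forall>j\<in>enum_index p. i \<le> j \<longrightarrow> pmf p (e j) \<le> pmf p (e i))"

definition guessing_entropy :: "'a pmf \<Rightarrow> ennreal" where
  "guessing_entropy p =
     (let e = (SOME e. guess_enum p e) in
      (\<Sum>n. if n \<in> enum_index p then ennreal (real (Suc n) * pmf p (e n)) else 0))"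

definition bundle_eval :: "('i \<Rightarrow> 'o) list \<Rightarrow> 'i \<Rightarrow> 'o list" where
  "bundle_eval Q D = map (\<lambda>q. q D) Q"

definition price_G :: "'i pmf \<Rightarrow> ('i \<Rightarrow> 'o) list \<Rightarrow> real" where
  "price_G p Q =
     enn2real (guessing_entropy p) -
     enn2real (infsum (\<lambda>E. ennreal (pmf (map_pmf (bundle_eval Q) p) E) *
                            guessing_entropy (cond_pmf p {D. bundle_eval Q D = E}))
                      (set_pmf (map_pmf (bundle_eval Q) p)))"

definition arbitrage_free :: "('i \<Rightarrow> 'o) set \<Rightarrow> (('i \<Rightarrow> 'o) list \<Rightarrow> real) \<Rightarrow> bool" where
  "arbitrage_free L pr \<longleftrightarrow>
     (\<forall>Q1\<in>lists L. \<forall>Q2\<in>lists L.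
        (\<forall>D' D''. bundle_eval Q2 D' = bundle_eval Q2 D'' \<longrightarrow> bundle_eval Q1 D' = bundle_eval Q1 D'')
        \<longrightarrow> pr Q2 \<ge> pr Q1) \<and>
     (\<forall>Q1\<in>lists L. \<forall>Q2\<in>lists L. pr (Q1 @ Q2) \<le> pr Q1 + pr Q2)"

end

theory Submission
  imports Defs
begin

lemma pmf_ge_finite:
  fixes q :: "'a pmf" and c :: real
  assumes "c > 0"
  shows "finite {y. pmf q y \<ge> c}"
proof (rule ccontr)
  assume inf: "infinite {y. pmf q y \<ge> c}"
  obtain n :: nat where n: "real n > 1 / c" using reals_Archimedean2 by blast
  obtain B where B: "finite B" "card B = n" "B \<subseteq> {y. pmf q y \<ge> c}"
    using infinite_arbitrarily_large[OF inf] by blast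
  have "real n * c = (\<Sum>y\<in>B. c)" using B by simp
  also have "\<dots> \<le> (\<Sum>y\<in>B. pmf q y)" using B by (intro sum_mono) auto
  also have "\<dots> = measure q B" using B by (simp add: measure_measure_pmf_finite)
  also have "\<dots> \<le> 1" by simp
  finally have "real n * c \<le> 1" .
  moreover have "real n * c > 1" using n assms by (simp add: field_simps)
  ultimately show False by simp
qed

lemma downclosed_nat:
  fixes D :: "nat set"
  assumes "\<And>d k. d \<in> D \<Longrightarrow> k < d \<Longrightarrow> k \<in> D"
  shows "D = (if finite D then {..<card D} else UNIV)"
proof (cases "finite D")
  case True
  have sub: "D \<subseteq> {..<card D}"
  proof
    fix d assume d: "d \<in> D"
    have "{..d} \<subseteq> D" using assms d by (auto simp: le_less)
    hence "card {..d} \<le> card D" using True by (intro card_mono)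
    thus "d \<in> {..<card D}" by simp
  qed
  have "D = {..<card D}" using True sub by (intro card_subset_eq) auto
  thus ?thesis using True by simp
next
  case False
  have "k \<in> D" for k
  proof -
    obtain d where "d \<in> D" "d > k" using False unfolding infinite_nat_iff_unbounded by blast
    thus ?thesis using assms by blast
  qed
  thus ?thesis using False by auto
qed

lemma guess_enum_exists:
  fixes q :: "'a::countable pmf"
  shows "\<exists>e. guess_enum q e"
proof -
  define S where "S = set_pmf q"
  define less where "less x y \<longleftrightarrow> pmf q x > pmf q y \<or> (pmf q x = pmf q y \<and> to_nat x < to_nat y)" for x y
  define P where "P x = {y\<in>S. less y x}" for x
  define r where "r x = card (P x)" for x
  have finP: "finite (P x)" if "x \<in> S" for x
  proof -
    have "pmf q x > 0" using that by (simp add: S_def pmf_positive)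
    hence "finite {y. pmf q y \<ge> pmf q x}" by (rule pmf_ge_finite)
    moreover have "P x \<subseteq> {y. pmf q y \<ge> pmf q x}" by (auto simp: P_def less_def)
    ultimately show ?thesis by (rule finite_subset[rotated])
  qed
  have less_trans: "less x z" if "less x y" "less y z" for x y z
    using that unfolding less_def by auto
  have less_irrefl: "\<not> less x x" for x by (simp add: less_def)
  have less_total: "less x y \<or> less y x" if "x \<noteq> y" for x y
  proof -
    have "to_nat x \<noteq> to_nat y" using that by simp
    thus ?thesis unfolding less_def by linarith
  qed
  have r_less: "r x < r y" if "less x y" "x \<in> S" "y \<in> S" for x y
  proof -
    have "P x \<subseteq> P y" using that less_trans by (auto simp: P_def)
    moreover have "x \<in> P y" "x \<notin> P x" using that less_irrefl by (auto simp: P_def)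
    ultimately have "P x \<subset> P y" by blast
    thus ?thesis unfolding r_def using finP[OF that(3)] by (rule psubset_card_mono[rotated])
  qed
  have inj: "inj_on r S"
  proof (rule inj_onI)
    fix x y assume "x \<in> S" "y \<in> S" "r x = r y"
    thus "x = y" using less_total[of x y] r_less[of x y] r_less[of y x] by fastforce
  qed
  have down: "k \<in> r ` S" if dS: "d \<in> r ` S" and kd: "k < d" for d k
  proof -
    obtain x where x: "x \<in> S" "d = r x" using dS by blast
    have "r ` P x \<subseteq> {..<r x}" using r_less x by (auto simp: P_def)
    moreover have "card (r ` P x) = r x"
    proof -
      have "inj_on r (P x)" using inj by (rule inj_on_subset) (auto simp: P_def)
      hence "card (r ` P x) = card (P x)" by (rule card_image)
      moreover have "r x = card (P x)" by (rule r_def)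
      ultimately show ?thesis by (rule trans[OF _ sym])
    qed
    ultimately have "r ` P x = {..<r x}" using finP[OF x(1)] by (intro card_subset_eq) auto
    hence "k \<in> r ` P x" using kd x by auto
    thus ?thesis by (auto simp: P_def)
  qed
  have img: "r ` S = enum_index q"
  proof -
    have "r ` S = (if finite (r ` S) then {..<card (r ` S)} else UNIV)"
      by (rule downclosed_nat) (use down in blast)
    moreover have "finite (r ` S) \<longleftrightarrow> finite S" using inj by (simp add: finite_image_iff)
    moreover have "card (r ` S) = card S" using inj by (simp add: card_image)
    ultimately show ?thesis unfolding enum_index_def S_def[symmetric]
      by (smt (verit, best))
  qed
  define e where "e = inv_into S r"
  have bij: "bij_betw e (enum_index q) S"
    unfolding e_def using bij_betw_imageI[OF inj img] by (rule bij_betw_inv_into)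
  have "pmf q (e j) \<le> pmf q (e i)" if "i \<in> enum_index q" "j \<in> enum_index q" "i \<le> j" for i j
  proof (rule ccontr)
    assume "\<not> ?thesis"
    hence "less (e j) (e i)" by (simp add: less_def)
    moreover have "e i \<in> S" "e j \<in> S" using bij that by (auto dest: bij_betwE)
    ultimately have "r (e j) < r (e i)" using r_less by blast
    moreover have "r (e i) = i" "r (e j) = j" using that img unfolding e_def
      by (auto intro: f_inv_into_f)
    ultimately show False using that by simp
  qed
  thus ?thesis using bij unfolding guess_enum_def S_def by blast
qed


lemma enum_transfer:
  fixes q :: "'a pmf" and \<phi> :: "'a \<Rightarrow> ennreal"
  assumes bij: "bij_betw e I (set_pmf q)"
    and z: "\<And>x. x \<notin> set_pmf q \<Longrightarrow> \<phi> x = 0"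
  shows "(\<integral>\<^sup>+n. (if n \<in> I then \<phi> (e n) else 0) \<partial>count_space UNIV) = (\<integral>\<^sup>+x. \<phi> x \<partial>count_space UNIV)"
proof -
  have "(\<integral>\<^sup>+n. (if n \<in> I then \<phi> (e n) else 0) \<partial>count_space UNIV)
      = (\<integral>\<^sup>+n. (if n \<in> I then \<phi> (e n) else 0) \<partial>count_space I)"
    by (rule nn_integral_count_space_eq) auto
  also have "\<dots> = (\<integral>\<^sup>+n. \<phi> (e n) \<partial>count_space I)"
    by (rule nn_integral_cong) auto
  also have "\<dots> = (\<integral>\<^sup>+x. \<phi> x \<partial>count_space (set_pmf q))"
    by (rule nn_integral_bij_count_space[OF bij])
  also have "\<dots> = (\<integral>\<^sup>+x. \<phi> x \<partial>count_space UNIV)"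
    by (rule nn_integral_count_space_eq) (auto simp: z)
  finally show ?thesis .
qed

lemma G_formula:
  fixes q :: "'a pmf"
  assumes ge: "guess_enum q e"
  shows "2 * (\<Sum>n. if n \<in> enum_index q then ennreal (real (Suc n) * pmf q (e n)) else 0)
         = 1 + (\<integral>\<^sup>+z. ennreal (min (pmf q (fst z)) (pmf q (snd z))) \<partial>count_space UNIV)"
proof -
  define I where "I = enum_index q"
  have bij: "bij_betw e I (set_pmf q)" and mono: "\<And>i j. i \<in> I \<Longrightarrow> j \<in> I \<Longrightarrow> i \<le> j \<Longrightarrow> pmf q (e j) \<le> pmf q (e i)"
    using ge unfolding guess_enum_def I_def by auto
  have downI: "m \<in> I" if "n \<in> I" "m \<le> n" for m n
    using that unfolding I_def enum_index_def by (auto split: if_splits)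
  define h where "h n = (if n \<in> I then pmf q (e n) else 0)" for n
  have h0: "h n \<ge> 0" for n by (simp add: h_def)
  have hmono: "h n \<le> h m" if "m \<le> n" for m n
    using that mono downI by (auto simp: h_def)
  define X where "X = (\<integral>\<^sup>+n. \<integral>\<^sup>+m. ennreal (if m \<le> n then min (h n) (h m) else 0) \<partial>count_space UNIV \<partial>count_space UNIV)"
  have inner1: "(\<integral>\<^sup>+m. ennreal (if m \<le> n then min (h n) (h m) else 0) \<partial>count_space UNIV) = ennreal (h n) * of_nat (Suc n)" for n
  proof -
    have "(\<lambda>m. ennreal (if m \<le> n then min (h n) (h m) else 0)) = (\<lambda>m. ennreal (h n) * indicator {..n} m)"
      using hmono by (auto simp: indicator_def min_def fun_eq_iff)
    hence "(\<integral>\<^sup>+m. ennreal (if m \<le> n then min (h n) (h m) else 0) \<partial>count_space UNIV) = ennreal (h n) * emeasure (count_space UNIV) {..n}"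
      by (simp add: nn_integral_cmult_indicator)
    also have "\<dots> = ennreal (h n) * of_nat (Suc n)"
      by (simp add: emeasure_count_space_finite)
    finally show ?thesis .
  qed
  have s1: "(\<Sum>n. if n \<in> I then ennreal (real (Suc n) * pmf q (e n)) else 0) = X"
  proof -
    have "X = (\<integral>\<^sup>+n. ennreal (h n) * of_nat (Suc n) \<partial>count_space UNIV)"
      unfolding X_def by (simp add: inner1)
    also have "\<dots> = (\<Sum>n. ennreal (h n) * of_nat (Suc n))" by (rule nn_integral_count_space_nat)
    also have "\<dots> = (\<Sum>n. if n \<in> I then ennreal (real (Suc n) * pmf q (e n)) else 0)"
      by (intro suminf_cong) (auto simp: h_def ennreal_mult ennreal_of_nat_eq_real_of_nat mult.commute)
    finally show ?thesis by simp
  qed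
  have s2: "X = (\<integral>\<^sup>+n. \<integral>\<^sup>+m. ennreal (if n \<le> m then min (h n) (h m) else 0) \<partial>count_space UNIV \<partial>count_space UNIV)"
  proof -
    have "X = (\<integral>\<^sup>+m. \<integral>\<^sup>+n. ennreal (if m \<le> n then min (h n) (h m) else 0) \<partial>count_space UNIV \<partial>count_space UNIV)"
      unfolding X_def
      by (rule nn_integral_count_space_nn_integral[where I=UNIV and M="count_space UNIV"]) auto
    also have "\<dots> = (\<integral>\<^sup>+n. \<integral>\<^sup>+m. ennreal (if n \<le> m then min (h n) (h m) else 0) \<partial>count_space UNIV \<partial>count_space UNIV)"
      by (intro nn_integral_cong) (metis min.commute)
    finally show ?thesis .
  qed
  have diag: "(\<integral>\<^sup>+m. ennreal (if m = n then h n else 0) \<partial>count_space UNIV) = ennreal (h n)" for n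
  proof -
    have "(\<lambda>m. ennreal (if m = n then h n else 0)) = (\<lambda>m. ennreal (h n) * indicator {n} m)"
      by (auto simp: indicator_def fun_eq_iff)
    thus ?thesis by (simp add: nn_integral_cmult_indicator)
  qed
  have sumh: "(\<integral>\<^sup>+n. ennreal (h n) \<partial>count_space UNIV) = 1"
  proof -
    have "(\<integral>\<^sup>+n. ennreal (h n) \<partial>count_space UNIV) = (\<integral>\<^sup>+n. (if n \<in> I then ennreal (pmf q (e n)) else 0) \<partial>count_space UNIV)"
      by (rule nn_integral_cong) (simp add: h_def)
    also have "\<dots> = (\<integral>\<^sup>+x. ennreal (pmf q x) \<partial>count_space UNIV)"
      by (rule enum_transfer[OF bij]) (simp add: set_pmf_eq)
    also have "\<dots> = 1" by (simp add: nn_integral_pmf)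
    finally show ?thesis .
  qed
  define F where "F x y = ennreal (min (pmf q x) (pmf q y))" for x y
  have minh: "(\<integral>\<^sup>+n. \<integral>\<^sup>+m. ennreal (min (h n) (h m)) \<partial>count_space UNIV \<partial>count_space UNIV)
      = (\<integral>\<^sup>+x. \<integral>\<^sup>+y. F x y \<partial>count_space UNIV \<partial>count_space UNIV)"
  proof -
    have in1: "(\<integral>\<^sup>+m. ennreal (min (h n) (h m)) \<partial>count_space UNIV)
        = (if n \<in> I then (\<integral>\<^sup>+y. F (e n) y \<partial>count_space UNIV) else 0)" for n
    proof (cases "n \<in> I")
      case True
      have "(\<integral>\<^sup>+m. ennreal (min (h n) (h m)) \<partial>count_space UNIV)
          = (\<integral>\<^sup>+m. (if m \<in> I then F (e n) (e m) else 0) \<partial>count_space UNIV)"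
        using True by (intro nn_integral_cong) (auto simp: h_def F_def min_def)
      also have "\<dots> = (\<integral>\<^sup>+y. F (e n) y \<partial>count_space UNIV)"
        by (rule enum_transfer[OF bij]) (auto simp: F_def set_pmf_eq min_def)
      finally show ?thesis using True by simp
    next
      case False
      thus ?thesis by (simp add: h_def)
    qed
    have "(\<integral>\<^sup>+n. \<integral>\<^sup>+m. ennreal (min (h n) (h m)) \<partial>count_space UNIV \<partial>count_space UNIV)
        = (\<integral>\<^sup>+n. (if n \<in> I then (\<integral>\<^sup>+y. F (e n) y \<partial>count_space UNIV) else 0) \<partial>count_space UNIV)"
      by (simp add: in1)
    also have "\<dots> = (\<integral>\<^sup>+x. \<integral>\<^sup>+y. F x y \<partial>count_space UNIV \<partial>count_space UNIV)"
      by (rule enum_transfer[OF bij]) (auto simp: F_def set_pmf_eq min_def)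
    finally show ?thesis .
  qed
  have "2 * X = X + X" by (simp add: mult_2)
  also have "\<dots> = (\<integral>\<^sup>+n. (\<integral>\<^sup>+m. ennreal (if m \<le> n then min (h n) (h m) else 0) \<partial>count_space UNIV)
                       + (\<integral>\<^sup>+m. ennreal (if n \<le> m then min (h n) (h m) else 0) \<partial>count_space UNIV) \<partial>count_space UNIV)"
    by (subst nn_integral_add) (auto simp: X_def s2[symmetric])
  also have "\<dots> = (\<integral>\<^sup>+n. (\<integral>\<^sup>+m. ennreal (if m \<le> n then min (h n) (h m) else 0)
                       + ennreal (if n \<le> m then min (h n) (h m) else 0) \<partial>count_space UNIV) \<partial>count_space UNIV)"
    by (intro nn_integral_cong) (simp add: nn_integral_add)
  also have "\<dots> = (\<integral>\<^sup>+n. (\<integral>\<^sup>+m. ennreal (min (h n) (h m)) + ennreal (if m = n then h n else 0) \<partial>count_space UNIV) \<partial>count_space UNIV)"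
    by (intro nn_integral_cong) (auto simp: mult_2[symmetric])
  also have "\<dots> = (\<integral>\<^sup>+n. (\<integral>\<^sup>+m. ennreal (min (h n) (h m)) \<partial>count_space UNIV) + ennreal (h n) \<partial>count_space UNIV)"
    by (intro nn_integral_cong) (simp add: nn_integral_add diag)
  also have "\<dots> = (\<integral>\<^sup>+x. \<integral>\<^sup>+y. F x y \<partial>count_space UNIV \<partial>count_space UNIV) + 1"
    by (simp add: nn_integral_add minh sumh)
  also have "(\<integral>\<^sup>+x. \<integral>\<^sup>+y. F x y \<partial>count_space UNIV \<partial>count_space UNIV)
      = (\<integral>\<^sup>+z. ennreal (min (pmf q (fst z)) (pmf q (snd z))) \<partial>count_space UNIV)"
    using nn_integral_fst_count_space[of "\<lambda>z. F (fst z) (snd z)"] by (simp add: F_def)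
  finally show ?thesis using s1 by (simp add: I_def add.commute)
qed


lemma G_eq:
  fixes q :: "'a::countable pmf"
  shows "2 * guessing_entropy q = 1 + (\<integral>\<^sup>+z. ennreal (min (pmf q (fst z)) (pmf q (snd z))) \<partial>count_space UNIV)"
proof -
  have "guess_enum q (SOME e. guess_enum q e)" using guess_enum_exists by (rule someI_ex)
  from G_formula[OF this] show ?thesis unfolding guessing_entropy_def Let_def .
qed

lemma infsum_nn:
  fixes g :: "'a \<Rightarrow> ennreal"
  assumes "countable A"
  shows "infsum g A = (\<integral>\<^sup>+x. g x \<partial>count_space A)"
proof -
  have eq: "infsum g A = (SUP F\<in>{F. finite F \<and> F \<subseteq> A}. sum g F)"
    by (rule nonneg_infsum_complete) simp
  have le: "sum g F \<le> (\<integral>\<^sup>+x. g x \<partial>count_space A)" if "finite F" "F \<subseteq> A" for F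
  proof -
    have "(\<integral>\<^sup>+x. g x * indicator F x \<partial>count_space A) = (\<Sum>x\<in>F. g x * indicator F x)"
      using that by (intro nn_integral_count_space') auto
    also have "\<dots> = sum g F" by (intro sum.cong) auto
    finally have "sum g F = (\<integral>\<^sup>+x. g x * indicator F x \<partial>count_space A)" by simp
    also have "\<dots> \<le> (\<integral>\<^sup>+x. g x \<partial>count_space A)"
      by (intro nn_integral_mono) (auto simp: indicator_def)
    finally show ?thesis .
  qed
  have ge: "(\<integral>\<^sup>+x. g x \<partial>count_space A) \<le> (SUP F\<in>{F. finite F \<and> F \<subseteq> A}. sum g F)"
  proof (cases "finite A")
    case True
    hence "(\<integral>\<^sup>+x. g x \<partial>count_space A) = sum g A" by (rule nn_integral_count_space_finite)
    thus ?thesis using True by (intro SUP_upper2[of A]) auto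
  next
    case False
    have bij: "bij_betw (from_nat_into A) UNIV A" using assms False by (rule bij_betw_from_nat_into)
    have "(\<integral>\<^sup>+x. g x \<partial>count_space A) = (\<integral>\<^sup>+n. g (from_nat_into A n) \<partial>count_space UNIV)"
      by (rule nn_integral_bij_count_space[OF bij, symmetric])
    also have "\<dots> = (\<Sum>n. g (from_nat_into A n))" by (rule nn_integral_count_space_nat)
    also have "\<dots> = (SUP n. \<Sum>i<n. g (from_nat_into A i))" by (rule suminf_eq_SUP)
    also have "\<dots> \<le> (SUP F\<in>{F. finite F \<and> F \<subseteq> A}. sum g F)"
    proof (rule SUP_least)
      fix n
      have inj: "inj_on (from_nat_into A) {..<n}" using bij by (auto simp: bij_betw_def inj_on_def)
      have "(\<Sum>i<n. g (from_nat_into A i)) = sum g (from_nat_into A ` {..<n})"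
        using sum.reindex[OF inj, of g] by simp
      also have "\<dots> \<le> (SUP F\<in>{F. finite F \<and> F \<subseteq> A}. sum g F)"
        using bij by (intro SUP_upper) (auto dest: bij_betwE)
      finally show "(\<Sum>i<n. g (from_nat_into A i)) \<le> (SUP F\<in>{F. finite F \<and> F \<subseteq> A}. sum g F)" .
    qed
    finally show ?thesis .
  qed
  show ?thesis unfolding eq using le ge by (intro antisym SUP_least) auto
qed

lemma cond_term:
  fixes p :: "'i::countable pmf" and f :: "'i \<Rightarrow> 'b"
  assumes E: "E \<in> set_pmf (map_pmf f p)"
  shows "2 * (ennreal (pmf (map_pmf f p) E) * guessing_entropy (cond_pmf p {D. f D = E}))
    = ennreal (pmf (map_pmf f p) E) +
      (\<integral>\<^sup>+z. ennreal (if f (fst z) = E \<and> f (snd z) = E then min (pmf p (fst z)) (pmf p (snd z)) else 0) \<partial>count_space UNIV)"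
proof -
  define c where "c = pmf (map_pmf f p) E"
  have c0: "c > 0" using E by (simp add: c_def pmf_positive)
  have meas: "measure p {D. f D = E} = c"
    unfolding c_def pmf_map by (simp add: vimage_def)
  have ne: "set_pmf p \<inter> {D. f D = E} \<noteq> {}" using E by auto
  have pc: "pmf (cond_pmf p {D. f D = E}) x = (if f x = E then pmf p x / c else 0)" for x
    using pmf_cond[OF ne] meas by simp
  have pt: "ennreal c * ennreal (min (pmf (cond_pmf p {D. f D = E}) x) (pmf (cond_pmf p {D. f D = E}) y))
      = ennreal (if f x = E \<and> f y = E then min (pmf p x) (pmf p y) else 0)" for x y
  proof (cases "f x = E \<and> f y = E")
    case True
    have "c * min (pmf p x / c) (pmf p y / c) = min (pmf p x) (pmf p y)"
      using c0 by (auto simp: min_def divide_right_mono field_simps)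
    thus ?thesis using True c0 by (simp add: pc ennreal_mult[symmetric])
  next
    case False
    thus ?thesis using c0 by (auto simp: pc min_def ennreal_eq_0_iff)
  qed
  have "2 * (ennreal c * guessing_entropy (cond_pmf p {D. f D = E}))
      = ennreal c * (2 * guessing_entropy (cond_pmf p {D. f D = E}))"
    by (simp add: ac_simps)
  also have "\<dots> = ennreal c * (1 + (\<integral>\<^sup>+z. ennreal (min (pmf (cond_pmf p {D. f D = E}) (fst z)) (pmf (cond_pmf p {D. f D = E}) (snd z))) \<partial>count_space UNIV))"
    by (simp add: G_eq)
  also have "\<dots> = ennreal c + (\<integral>\<^sup>+z. ennreal c * ennreal (min (pmf (cond_pmf p {D. f D = E}) (fst z)) (pmf (cond_pmf p {D. f D = E}) (snd z))) \<partial>count_space UNIV)"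
    by (simp add: distrib_left nn_integral_cmult)
  also have "\<dots> = ennreal c + (\<integral>\<^sup>+z. ennreal (if f (fst z) = E \<and> f (snd z) = E then min (pmf p (fst z)) (pmf p (snd z)) else 0) \<partial>count_space UNIV)"
    by (simp add: pt)
  finally show ?thesis by (simp add: c_def)
qed


lemma S_eq:
  fixes p :: "'i::countable pmf" and f :: "'i \<Rightarrow> 'b"
  shows "2 * infsum (\<lambda>E. ennreal (pmf (map_pmf f p) E) * guessing_entropy (cond_pmf p {D. f D = E}))
                      (set_pmf (map_pmf f p))
    = 1 + (\<integral>\<^sup>+z. ennreal (if f (fst z) = f (snd z) then min (pmf p (fst z)) (pmf p (snd z)) else 0) \<partial>count_space UNIV)"
proof -
  define A where "A = set_pmf (map_pmf f p)"
  have cA: "countable A" by (simp add: A_def)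
  define F where "F E z = ennreal (if f (fst z) = E \<and> f (snd z) = E then min (pmf p (fst z)) (pmf p (snd z)) else 0)" for E z
  have inner: "(\<integral>\<^sup>+E. F E z \<partial>count_space A) = ennreal (if f (fst z) = f (snd z) then min (pmf p (fst z)) (pmf p (snd z)) else 0)" for z
  proof (cases "f (fst z) = f (snd z) \<and> f (fst z) \<in> A")
    case True
    have "(\<integral>\<^sup>+E. F E z \<partial>count_space A) = (\<integral>\<^sup>+E. ennreal (min (pmf p (fst z)) (pmf p (snd z))) * indicator {f (fst z)} E \<partial>count_space A)"
      using True by (intro nn_integral_cong) (auto simp: F_def indicator_def)
    also have "\<dots> = ennreal (min (pmf p (fst z)) (pmf p (snd z)))"
      using True by (subst nn_integral_cmult_indicator) auto
    finally show ?thesis using True by simp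
  next
    case False
    have "(\<integral>\<^sup>+E. F E z \<partial>count_space A) = (\<integral>\<^sup>+E. 0 \<partial>count_space A)"
      using False by (intro nn_integral_cong) (auto simp: F_def)
    moreover have "pmf p (fst z) = 0" if "f (fst z) = f (snd z)"
    proof -
      have "fst z \<notin> set_pmf p" using False that unfolding A_def by (metis imageI set_map_pmf)
      thus ?thesis by (simp add: set_pmf_iff)
    qed
    ultimately show ?thesis by (auto simp: min_def)
  qed
  have "2 * infsum (\<lambda>E. ennreal (pmf (map_pmf f p) E) * guessing_entropy (cond_pmf p {D. f D = E})) A
      = 2 * (\<integral>\<^sup>+E. ennreal (pmf (map_pmf f p) E) * guessing_entropy (cond_pmf p {D. f D = E}) \<partial>count_space A)"
    by (simp add: infsum_nn[OF cA])
  also have "\<dots> = (\<integral>\<^sup>+E. 2 * (ennreal (pmf (map_pmf f p) E) * guessing_entropy (cond_pmf p {D. f D = E})) \<partial>count_space A)"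
    by (simp add: nn_integral_cmult)
  also have "\<dots> = (\<integral>\<^sup>+E. ennreal (pmf (map_pmf f p) E) + (\<integral>\<^sup>+z. F E z \<partial>count_space UNIV) \<partial>count_space A)"
    by (intro nn_integral_cong) (simp add: cond_term A_def F_def)
  also have "\<dots> = (\<integral>\<^sup>+E. ennreal (pmf (map_pmf f p) E) \<partial>count_space A) + (\<integral>\<^sup>+E. (\<integral>\<^sup>+z. F E z \<partial>count_space UNIV) \<partial>count_space A)"
    by (simp add: nn_integral_add)
  also have "(\<integral>\<^sup>+E. ennreal (pmf (map_pmf f p) E) \<partial>count_space A) = 1"
    unfolding nn_integral_pmf A_def by (rule emeasure_pmf)
  also have "(\<integral>\<^sup>+E. (\<integral>\<^sup>+z. F E z \<partial>count_space UNIV) \<partial>count_space A) = (\<integral>\<^sup>+z. (\<integral>\<^sup>+E. F E z \<partial>count_space A) \<partial>count_space UNIV)"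
    by (rule nn_integral_count_space_nn_integral[symmetric, OF cA]) auto
  also have "\<dots> = (\<integral>\<^sup>+z. ennreal (if f (fst z) = f (snd z) then min (pmf p (fst z)) (pmf p (snd z)) else 0) \<partial>count_space UNIV)"
    by (simp add: inner)
  finally show ?thesis by (simp add: A_def)
qed

definition Nf :: "'i pmf \<Rightarrow> ('i \<Rightarrow> 'b) \<Rightarrow> ennreal" where
  "Nf p f = (\<integral>\<^sup>+z. ennreal (if f (fst z) \<noteq> f (snd z) then min (pmf p (fst z)) (pmf p (snd z)) else 0) \<partial>count_space UNIV)"

lemma price_eq:
  fixes p :: "'i::countable pmf"
  assumes fin: "guessing_entropy p < \<infinity>"
  shows "price_G p Q = enn2real (Nf p (bundle_eval Q)) / 2" and "Nf p (bundle_eval Q) < \<infinity>"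
proof -
  define f where "f = bundle_eval Q"
  define Mf where "Mf = (\<integral>\<^sup>+z. ennreal (if f (fst z) = f (snd z) then min (pmf p (fst z)) (pmf p (snd z)) else 0) \<partial>count_space UNIV)"
  define N where "N = Nf p f"
  have MN: "(\<integral>\<^sup>+z. ennreal (min (pmf p (fst z)) (pmf p (snd z))) \<partial>count_space UNIV) = Mf + N"
    unfolding Mf_def N_def Nf_def by (subst nn_integral_add[symmetric]) (auto intro!: nn_integral_cong)
  have G2: "2 * guessing_entropy p = 1 + Mf + N" using G_eq[of p] MN by (simp add: add.assoc)
  have "2 * guessing_entropy p < \<infinity>" using fin by (simp add: ennreal_mult_less_top)
  hence fin2: "Mf < \<infinity>" "N < \<infinity>" using G2 by (auto simp: top_unique)
  define S where "S = infsum (\<lambda>E. ennreal (pmf (map_pmf f p) E) * guessing_entropy (cond_pmf p {D. f D = E})) (set_pmf (map_pmf f p))"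
  have S2: "2 * S = 1 + Mf" unfolding S_def Mf_def by (rule S_eq)
  have "2 * enn2real (guessing_entropy p) = 1 + enn2real Mf + enn2real N"
  proof -
    have "2 * enn2real (guessing_entropy p) = enn2real (2 * guessing_entropy p)" by (simp add: enn2real_mult)
    also have "\<dots> = enn2real (1 + Mf + N)" by (simp add: G2)
    also have "\<dots> = 1 + enn2real Mf + enn2real N" using fin2 by (simp add: enn2real_plus)
    finally show ?thesis .
  qed
  moreover have "2 * enn2real S = 1 + enn2real Mf"
  proof -
    have "2 * enn2real S = enn2real (2 * S)" by (simp add: enn2real_mult)
    also have "\<dots> = 1 + enn2real Mf" using fin2 by (simp add: S2 enn2real_plus)
    finally show ?thesis .
  qed
  moreover have "price_G p Q = enn2real (guessing_entropy p) - enn2real S"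
    unfolding price_G_def S_def f_def ..
  ultimately show "price_G p Q = enn2real (Nf p (bundle_eval Q)) / 2"
    by (simp add: N_def f_def field_simps)
  show "Nf p (bundle_eval Q) < \<infinity>" using fin2 by (simp add: N_def f_def)
qed

theorem lemma19:
  fixes p :: "'i::countable pmf" and L :: "('i \<Rightarrow> 'o) set"
  assumes "guessing_entropy p < \<infinity>"
  shows "arbitrage_free L (price_G p)"
  unfolding arbitrage_free_def
proof (intro conjI ballI impI)
  fix Q1 Q2 :: "('i \<Rightarrow> 'o) list" assume hyp: "\<forall>D' D''. bundle_eval Q2 D' = bundle_eval Q2 D'' \<longrightarrow> bundle_eval Q1 D' = bundle_eval Q1 D''"
  have imp: "bundle_eval Q2 x \<noteq> bundle_eval Q2 y" if "bundle_eval Q1 x \<noteq> bundle_eval Q1 y" for x y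
    using hyp that by blast
  have "Nf p (bundle_eval Q1) \<le> Nf p (bundle_eval Q2)"
    unfolding Nf_def
  proof (intro nn_integral_mono)
    fix z :: "'i \<times> 'i"
    show "ennreal (if bundle_eval Q1 (fst z) \<noteq> bundle_eval Q1 (snd z) then min (pmf p (fst z)) (pmf p (snd z)) else 0)
       \<le> ennreal (if bundle_eval Q2 (fst z) \<noteq> bundle_eval Q2 (snd z) then min (pmf p (fst z)) (pmf p (snd z)) else 0)"
      using imp[of "fst z" "snd z"] by (cases "bundle_eval Q1 (fst z) \<noteq> bundle_eval Q1 (snd z)") simp_all
  qed
  hence "enn2real (Nf p (bundle_eval Q1)) \<le> enn2real (Nf p (bundle_eval Q2))"
    using price_eq(2)[OF assms, of Q2] by (intro enn2real_mono) auto
  thus "price_G p Q2 \<ge> price_G p Q1" by (simp add: price_eq(1)[OF assms])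
next
  fix Q1 Q2 :: "('i \<Rightarrow> 'o) list"
  have "Nf p (bundle_eval (Q1 @ Q2)) \<le> Nf p (bundle_eval Q1) + Nf p (bundle_eval Q2)"
    unfolding Nf_def
  proof (subst nn_integral_add[symmetric], simp, simp, intro nn_integral_mono)
    fix z :: "'i \<times> 'i"
    have app: "bundle_eval (Q1 @ Q2) x = bundle_eval Q1 x @ bundle_eval Q2 x" for x
      by (simp add: bundle_eval_def)
    have "bundle_eval Q1 (fst z) \<noteq> bundle_eval Q1 (snd z) \<or> bundle_eval Q2 (fst z) \<noteq> bundle_eval Q2 (snd z)"
      if "bundle_eval (Q1 @ Q2) (fst z) \<noteq> bundle_eval (Q1 @ Q2) (snd z)"
      using that unfolding app by auto
    thus "ennreal (if bundle_eval (Q1 @ Q2) (fst z) \<noteq> bundle_eval (Q1 @ Q2) (snd z) then min (pmf p (fst z)) (pmf p (snd z)) else 0)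
       \<le> ennreal (if bundle_eval Q1 (fst z) \<noteq> bundle_eval Q1 (snd z) then min (pmf p (fst z)) (pmf p (snd z)) else 0)
         + ennreal (if bundle_eval Q2 (fst z) \<noteq> bundle_eval Q2 (snd z) then min (pmf p (fst z)) (pmf p (snd z)) else 0)"
      by (cases "bundle_eval (Q1 @ Q2) (fst z) \<noteq> bundle_eval (Q1 @ Q2) (snd z)") (auto simp del: ennreal_plus)
  qed
  hence "enn2real (Nf p (bundle_eval (Q1 @ Q2))) \<le> enn2real (Nf p (bundle_eval Q1) + Nf p (bundle_eval Q2))"
    using price_eq(2)[OF assms, of Q1] price_eq(2)[OF assms, of Q2] by (intro enn2real_mono) auto
  also have "\<dots> = enn2real (Nf p (bundle_eval Q1)) + enn2real (Nf p (bundle_eval Q2))"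
    using price_eq(2)[OF assms, of Q1] price_eq(2)[OF assms, of Q2] by (simp add: enn2real_plus)
  finally show "price_G p (Q1 @ Q2) \<le> price_G p Q1 + price_G p Q2"
    by (simp add: price_eq(1)[OF assms])
qed

end
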